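(* Let $q$ be a prime power and $n\ge 1$. Suppose $\frac{n(q-1)}{2}\le k\le n(q-1)$, $2k\equiv 0\pmod{q-1}$, and $k\not\equiv 0\pmod{q-1}$. Then $(C_{n,k}^q)^\perp$ is self-orthogonal. Equivalently, for every odd integer $r$ with $n\le r<2n$ (and $q$ odd), the code $(C_{n,r(q-1)/2}^q)^\perp$ is self-orthogonal.
   Context: For a prime power $q$ and integers $n\ge 1$, $k\ge 0$, the projective Reed-Muller code $C_{n,k}^q\subseteq \mathbb{F}_q^N$, $N=\frac{q^{n+1}-1}{q-1}$, is defined as follows. For each point of $\mathbb{P}^n(\mathbb{F}_q)$ choose the affine representative $(p_0,\dots,p_n)\in\mathbb{F}_q^{n+1}\setminus\{0\}$ whose left-most nonzero coordinate equals $1$, and fix an ordering $P_1',\dots,P_N'$ of these representatives. Then $C_{n,k}^q=\{(F(P_1'),\dots,F(P_N')) : F\in \mathbb{F}_q[x_0,\dots,x_n]_k\}$, where $\mathbb{F}_q[x_0,\dots,x_n]_k$ is the space of homogeneous polynomials of degree $k$ together with $0$. Duals are taken with respect to the standard dot product; a code $C$ is self-orthogonal if $C\subseteq C^\perp$. *)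

theory Defs
  imports Main
begin

text \<open>Points of P^n(F_q): normalized affine representatives, i.e. vectors
  p :: nat => 'a supported on {0..n}, nonzero, whose left-most nonzero
  coordinate equals 1.\<close>
definition proj_points :: "nat \<Rightarrow> (nat \<Rightarrow> 'a::field) set" where
  "proj_points n = {p. (\<forall>i>n. p i = 0) \<and>
      (\<exists>j\<le>n. p j = 1 \<and> (\<forall>i<j. p i = 0))}"

definition monomials :: "nat \<Rightarrow> nat \<Rightarrow> (nat \<Rightarrow> nat) set" where
  "monomials n k = {e. (\<forall>i>n. e i = 0) \<and> (\<Sum>i\<le>n. e i) = k}"

definition hom_eval :: "nat \<Rightarrow> nat \<Rightarrow> ((nat \<Rightarrow> nat) \<Rightarrow> 'a::field) \<Rightarrow> (nat \<Rightarrow> 'a) \<Rightarrow> 'a" where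
  "hom_eval n k a p = (\<Sum>e\<in>monomials n k. a e * (\<Prod>i\<le>n. p i ^ e i))"

text \<open>Vectors of F_q^N are functions on proj_points n (zero elsewhere).\<close>
definition proj_RM :: "nat \<Rightarrow> nat \<Rightarrow> ((nat \<Rightarrow> 'a::field) \<Rightarrow> 'a) set" where
  "proj_RM n k = {c. \<exists>a. c = (\<lambda>p. if p \<in> proj_points n then hom_eval n k a p else 0)}"

definition dotp :: "nat \<Rightarrow> ((nat \<Rightarrow> 'a::field) \<Rightarrow> 'a) \<Rightarrow> ((nat \<Rightarrow> 'a) \<Rightarrow> 'a) \<Rightarrow> 'a" where
  "dotp n u v = (\<Sum>p\<in>proj_points n. u p * v p)"

definition dual_code :: "nat \<Rightarrow> ((nat \<Rightarrow> 'a::field) \<Rightarrow> 'a) set \<Rightarrow> ((nat \<Rightarrow> 'a) \<Rightarrow> 'a) set" where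
  "dual_code n C = {v. (\<forall>p. p \<notin> proj_points n \<longrightarrow> v p = 0) \<and> (\<forall>c\<in>C. dotp n v c = 0)}"

definition self_orthogonal :: "nat \<Rightarrow> ((nat \<Rightarrow> 'a::field) \<Rightarrow> 'a) set \<Rightarrow> bool" where
  "self_orthogonal n C \<longleftrightarrow> C \<subseteq> dual_code n C"

end

theory Submission
  imports Defs "HOL-Library.FuncSet" "HOL-Computational_Algebra.Polynomial"
begin


lemma ff_char: "of_nat (card (UNIV::'a::{finite,field} set)) = (0::'a)"
proof -
  have b: "bij_betw (\<lambda>x::'a. x + 1) UNIV UNIV"
    by (rule bij_betwI[where g="\<lambda>x. x - 1"]) auto
  have "(\<Sum>x\<in>(UNIV::'a set). x) = (\<Sum>x\<in>UNIV. x + 1)"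
    using sum.reindex_bij_betw[OF b, of "\<lambda>x. x"] by simp
  also have "\<dots> = (\<Sum>x\<in>UNIV. x) + of_nat (card (UNIV::'a set))"
    by (simp add: sum.distrib)
  finally show ?thesis by simp
qed

lemma ff_fermat:
  fixes x :: "'a::{finite,field}"
  assumes "x \<noteq> 0"
  shows "x ^ (card (UNIV::'a set) - 1) = 1"
proof -
  let ?N = "UNIV - {0::'a}"
  have cN: "card ?N = card (UNIV::'a set) - 1" by (simp add: card_Diff_singleton)
  have b: "bij_betw (\<lambda>y. x * y) ?N ?N"
    by (rule bij_betwI[where g="\<lambda>y. y / x"]) (use assms in auto)
  have "(\<Prod>y\<in>?N. y) = (\<Prod>y\<in>?N. x * y)"
    using prod.reindex_bij_betw[OF b, of "\<lambda>y. y"] by simp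
  also have "\<dots> = x ^ card ?N * (\<Prod>y\<in>?N. y)"
    by (simp add: prod.distrib)
  finally have "x ^ card ?N * (\<Prod>y\<in>?N. y) = 1 * (\<Prod>y\<in>?N. y)" by simp
  moreover have "(\<Prod>y\<in>?N. y) \<noteq> 0" by simp
  ultimately show ?thesis using cN by (metis mult_right_cancel)
qed

lemma ff_card_pos: "card (UNIV::'a::{finite,field} set) \<ge> 2"
proof -
  have "{0,1} \<subseteq> (UNIV::'a set)" by simp
  hence "card {0::'a,1} \<le> card (UNIV::'a set)" by (rule card_mono[OF finite_UNIV])
  thus ?thesis by simp
qed

lemma ff_pow_q:
  fixes x :: "'a::{finite,field}"
  shows "x ^ card (UNIV::'a set) = x"
proof (cases "x = 0")
  case True thus ?thesis using ff_card_pos[where 'a='a] by simp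
next
  case False
  have "x ^ card (UNIV::'a set) = x * x ^ (card (UNIV::'a set) - 1)"
    using ff_card_pos[where 'a='a] by (metis Suc_diff_1 less_le_trans pos2 power_Suc)
  thus ?thesis using ff_fermat[OF False] by simp
qed

lemma ff_pow_mult:
  fixes x :: "'a::{finite,field}"
  assumes "x \<noteq> 0"
  shows "x ^ ((card (UNIV::'a set) - 1) * j) = 1"
  using ff_fermat[OF assms] by (simp add: power_mult)

lemma ff_indicator:
  fixes a b :: "'a::{finite,field}"
  shows "1 - (\<Sum>t<card (UNIV::'a set). a ^ t * b ^ (card (UNIV::'a set) - 1 - t)) = (if a = b then 1 else 0)"
proof -
  let ?q = "card (UNIV::'a set)"
  show ?thesis
  proof (cases "a = b")
    case True
    have "(\<Sum>t<?q. a ^ t * b ^ (?q - 1 - t)) = (\<Sum>t<?q. a ^ (?q - 1))"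
      using True by (intro sum.cong) (auto simp flip: power_add)
    also have "\<dots> = 0" using ff_char[where 'a='a] by simp
    finally show ?thesis using True by simp
  next
    case False
    have "a ^ ?q - b ^ ?q = (a - b) * (\<Sum>i<?q. b^(?q - Suc i) * a^i)" by (rule power_diff_sumr2)
    also have "(\<Sum>i<?q. b^(?q - Suc i) * a^i) = (\<Sum>t<?q. a ^ t * b ^ (?q - 1 - t))"
      by (intro sum.cong) (auto simp: mult.commute)
    finally have "a - b = (a - b) * (\<Sum>t<?q. a ^ t * b ^ (?q - 1 - t))" by (simp add: ff_pow_q)
    hence "(\<Sum>t<?q. a ^ t * b ^ (?q - 1 - t)) = 1" using False by simp
    thus ?thesis using False by simp
  qed
qed




lemma ff_charsum:
  fixes t :: nat
  assumes "\<not> (card (UNIV::'a::{finite,field} set) - 1) dvd t"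
  shows "(\<Sum>c\<in>UNIV - {0::'a}. c ^ t) = 0"
proof -
  let ?Q = "card (UNIV::'a set) - 1"
  let ?N = "UNIV - {0::'a}"
  define t' where "t' = t mod ?Q"
  have Qpos: "?Q > 0" using ff_card_pos[where 'a='a] by simp
  have t'pos: "t' > 0" using assms unfolding t'_def by (metis dvd_eq_mod_eq_0 gr0I)
  have t'lt: "t' < ?Q" unfolding t'_def using Qpos by simp
  have ex: "\<exists>c\<in>?N. c ^ t' \<noteq> 1"
  proof (rule ccontr)
    assume "\<not> ?thesis"
    hence all: "\<forall>c\<in>?N. c ^ t' = 1" by auto
    let ?p = "monom (1::'a) t' - 1"
    have "coeff ?p t' = 1" using t'pos by simp
    hence pnz: "?p \<noteq> 0" by (metis coeff_0 zero_neq_one)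
    have "degree ?p \<le> t'"
      by (metis degree_diff_le degree_1 degree_monom_le le0)
    moreover have "card {x. poly ?p x = 0} \<le> degree ?p" by (rule card_poly_roots_bound[OF pnz])
    moreover have "?N \<subseteq> {x. poly ?p x = 0}" using all by (auto simp: poly_monom)
    hence "card ?N \<le> card {x. poly ?p x = 0}" by (intro card_mono) auto
    moreover have "card ?N = ?Q" by (simp add: card_Diff_singleton)
    ultimately show False using t'lt by linarith
  qed
  then obtain c0 where c0': "c0 \<in> ?N" "c0 ^ t' \<noteq> 1" by blast
  hence c0: "c0 \<noteq> 0" "c0 ^ t' \<noteq> 1" by auto
  have ct: "c0 ^ t = c0 ^ t'"
  proof -
    have "t = ?Q * (t div ?Q) + t'" unfolding t'_def by simp
    hence "c0 ^ t = c0 ^ (?Q * (t div ?Q)) * c0 ^ t'" by (metis power_add)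
    thus ?thesis using ff_pow_mult[OF c0(1)] by simp
  qed
  have b: "bij_betw (\<lambda>y. c0 * y) ?N ?N"
    by (rule bij_betwI[where g="\<lambda>y. y / c0"]) (use c0 in auto)
  have "(\<Sum>c\<in>?N. c ^ t) = (\<Sum>c\<in>?N. (c0 * c) ^ t)"
    using sum.reindex_bij_betw[OF b, of "\<lambda>y. y ^ t"] by simp
  also have "\<dots> = c0 ^ t * (\<Sum>c\<in>?N. c ^ t)"
    by (simp add: sum_distrib_left power_mult_distrib)
  finally have "(1 - c0 ^ t) * (\<Sum>c\<in>?N. c ^ t) = 0" by (simp add: algebra_simps)
  thus ?thesis using c0 ct by simp
qed

lemma finite_points: "finite (proj_points n :: (nat \<Rightarrow> 'a::{finite,field}) set)"
proof -
  have "proj_points n \<subseteq> {f::nat\<Rightarrow>'a. \<forall>x. (x \<in> {..n} \<longrightarrow> f x \<in> UNIV) \<and> (x \<notin> {..n} \<longrightarrow> f x = 0)}"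
    unfolding proj_points_def by auto
  moreover have "finite {f::nat\<Rightarrow>'a. \<forall>x. (x \<in> {..n} \<longrightarrow> f x \<in> UNIV) \<and> (x \<notin> {..n} \<longrightarrow> f x = 0)}"
    by (rule finite_set_of_finite_funs) auto
  ultimately show ?thesis by (rule finite_subset)
qed

lemma finite_monomials: "finite (monomials n k)"
proof -
  have "monomials n k \<subseteq> {f::nat\<Rightarrow>nat. \<forall>x. (x \<in> {..n} \<longrightarrow> f x \<in> {..k}) \<and> (x \<notin> {..n} \<longrightarrow> f x = 0)}"
  proof
    fix e assume e: "e \<in> monomials n k"
    have "\<And>x. x \<le> n \<Longrightarrow> e x \<le> k"
    proof -
      fix x assume "x \<le> n"
      hence "e x \<le> (\<Sum>i\<le>n. e i)" by (intro member_le_sum) auto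
      thus "e x \<le> k" using e unfolding monomials_def by simp
    qed
    thus "e \<in> {f. \<forall>x. (x \<in> {..n} \<longrightarrow> f x \<in> {..k}) \<and> (x \<notin> {..n} \<longrightarrow> f x = 0)}"
      using e unfolding monomials_def by auto
  qed
  moreover have "finite {f::nat\<Rightarrow>nat. \<forall>x. (x \<in> {..n} \<longrightarrow> f x \<in> {..k}) \<and> (x \<notin> {..n} \<longrightarrow> f x = 0)}"
    by (rule finite_set_of_finite_funs) auto
  ultimately show ?thesis by (rule finite_subset)
qed

lemma points_scale:
  fixes x P :: "nat \<Rightarrow> 'a::field"
  assumes x: "x \<in> proj_points n" and P: "P \<in> proj_points n" and c: "c \<noteq> 0"
    and eq: "x = (\<lambda>i. c * P i)"
  shows "c = 1"
proof -
  obtain j where j: "j \<le> n" "x j = 1" "\<forall>i<j. x i = 0" using x unfolding proj_points_def by auto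
  obtain l where l: "l \<le> n" "P l = 1" "\<forall>i<l. P i = 0" using P unfolding proj_points_def by auto
  have "\<not> j < l" using j l eq by (metis mult_zero_right zero_neq_one)
  moreover have "\<not> l < j" using j l eq c by (metis mult_1_right)
  ultimately have "j = l" by simp
  thus ?thesis using j l eq by (metis mult_1_right)
qed

lemma hom_eval_single:
  assumes "m \<in> monomials n k"
  shows "hom_eval n k (\<lambda>e. if e = m then 1 else 0) p = (\<Prod>i\<le>n. p i ^ m i)"
  unfolding hom_eval_def using assms finite_monomials[of n k]
  by (simp add: if_distrib[of "\<lambda>x. x * _"] sum.delta' cong: if_cong)

lemma lift_exists:
  fixes m :: "nat \<Rightarrow> nat"
  assumes supp: "\<forall>i>n. m i = 0" and A: "(\<Sum>i\<le>n. m i) \<noteq> 0" "(\<Sum>i\<le>n. m i) \<le> k"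
    and dv: "(card (UNIV::'a::{finite,field} set) - 1) dvd (k - (\<Sum>i\<le>n. m i))"
  shows "\<exists>m'. m' \<in> monomials n k \<and> (\<forall>p::nat\<Rightarrow>'a. (\<Prod>i\<le>n. p i ^ m' i) = (\<Prod>i\<le>n. p i ^ m i))"
proof -
  let ?Q = "card (UNIV::'a set) - 1"
  obtain i0 where i0: "i0 \<le> n" "m i0 \<noteq> 0" using A(1) by (metis atMost_iff sum.neutral)
  define d where "d = k - (\<Sum>i\<le>n. m i)"
  obtain j where dj: "d = ?Q * j" using dv unfolding d_def by (auto elim: dvdE)
  define m' where "m' = (\<lambda>i. m i + (if i = i0 then d else 0))"
  have "(\<Sum>i\<le>n. m' i) = (\<Sum>i\<le>n. m i) + d"
    unfolding m'_def using i0 by (simp add: sum.distrib)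
  hence "m' \<in> monomials n k" unfolding monomials_def m'_def d_def using supp i0 A by auto
  moreover have "\<forall>p::nat\<Rightarrow>'a. (\<Prod>i\<le>n. p i ^ m' i) = (\<Prod>i\<le>n. p i ^ m i)"
  proof (intro allI prod.cong refl)
    fix p :: "nat \<Rightarrow> 'a" and i assume "i \<in> {..n}"
    show "p i ^ m' i = p i ^ m i"
    proof (cases "i = i0")
      case True
      show ?thesis
      proof (cases "p i = 0")
        case True thus ?thesis using i0 \<open>i = i0\<close> unfolding m'_def by (simp add: power_0_left)
      next
        case False
        have "p i ^ m' i = p i ^ m i * p i ^ (?Q * j)" unfolding m'_def using True dj by (simp add: power_add)
        thus ?thesis using ff_pow_mult[OF False] by simp
      qed
    qed (simp add: m'_def)
  qed
  ultimately show ?thesis by blast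
qed




lemma numeric:
  fixes Q A B k n c :: nat
  assumes Q: "Q > 0" and AB: "A + B = Q * c" and c: "c \<le> n + 1"
    and nk: "Q * n \<le> 2 * k" and Bk: "B > k" and dkB: "Q dvd (k + B)"
    and nd: "\<not> Q dvd k"
  shows "A \<noteq> 0 \<and> A \<le> k \<and> Q dvd (k - A)"
proof -
  have "Q * c \<le> Q * (n+1)" using c by (rule mult_le_mono2)
  hence lt: "A < k + Q" using AB nk Bk by (simp add: algebra_simps)
  obtain j where j: "k + B = Q * j" using dkB by (auto elim: dvdE)
  have e1: "int A + int B = int Q * int c" using AB by (metis of_nat_add of_nat_mult)
  have e2: "int k + int B = int Q * int j" using j by (metis of_nat_add of_nat_mult)
  have "int A - int k = int Q * (int c - int j)" unfolding right_diff_distrib using e1 e2 by linarith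
  hence dv: "int Q dvd (int A - int k)" by simp
  have Ak: "A \<le> k"
  proof (rule ccontr)
    assume "\<not> A \<le> k"
    hence "int A - int k > 0" "int A - int k < int Q" using lt by auto
    thus False using dv zdvd_not_zless by blast
  qed
  have "int Q dvd (int k - int A)" using dv by (simp add: dvd_diff_commute)
  hence d: "Q dvd (k - A)" using Ak by (simp add: of_nat_diff[symmetric] del: of_nat_diff)
  have "A \<noteq> 0" using d nd by (metis minus_nat.diff_0)
  thus ?thesis using Ak d by auto
qed




definition ffu :: "nat \<Rightarrow> nat \<Rightarrow> 'a::field \<Rightarrow> 'a \<Rightarrow> 'a" where
  "ffu q u a b = (if u < q then - (a ^ u * b ^ (q - 1 - u)) else 1)"
definition al :: "nat \<Rightarrow> nat \<Rightarrow> (nat \<Rightarrow> nat) \<Rightarrow> nat \<Rightarrow> nat" where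
  "al q n s i = (if i \<le> n \<and> s i < q then s i else 0)"
definition be :: "nat \<Rightarrow> nat \<Rightarrow> (nat \<Rightarrow> nat) \<Rightarrow> nat \<Rightarrow> nat" where
  "be q n s i = (if i \<le> n \<and> s i < q then q - 1 - s i else 0)"
definition sg :: "nat \<Rightarrow> nat \<Rightarrow> (nat \<Rightarrow> nat) \<Rightarrow> 'a::field" where
  "sg q n s = (\<Prod>i\<le>n. if s i < q then -1 else 1)"

lemma expansion:
  fixes x y :: "nat \<Rightarrow> 'a::{finite,field}"
  defines "q \<equiv> card (UNIV::'a set)"
  shows "(\<Prod>i\<le>n. if x i = y i then 1 else 0) =
    (\<Sum>s\<in>PiE {..n} (\<lambda>_. {..q}). sg q n s * (\<Prod>i\<le>n. x i ^ al q n s i) * (\<Prod>i\<le>n. y i ^ be q n s i))"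
proof -
  have "(\<Prod>i\<le>n. if x i = y i then (1::'a) else 0) = (\<Prod>i\<le>n. \<Sum>u\<in>{..q}. ffu q u (x i) (y i))"
  proof (intro prod.cong refl)
    fix i
    have "{..q} = insert q {..<q}" by auto
    hence "(\<Sum>u\<in>{..q}. ffu q u (x i) (y i)) = 1 + (\<Sum>u<q. - (x i ^ u * y i ^ (q - 1 - u)))"
      by (simp add: ffu_def)
    also have "\<dots> = (if x i = y i then 1 else 0)"
      using ff_indicator[of "x i" "y i"] unfolding q_def by (simp add: sum_negf)
    finally show "(if x i = y i then 1 else 0) = (\<Sum>u\<in>{..q}. ffu q u (x i) (y i))" by simp
  qed
  also have "\<dots> = (\<Sum>s\<in>PiE {..n} (\<lambda>_. {..q}). \<Prod>i\<le>n. ffu q (s i) (x i) (y i))"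
    by (rule prod_sum_PiE) auto
  also have "\<dots> = (\<Sum>s\<in>PiE {..n} (\<lambda>_. {..q}). sg q n s * (\<Prod>i\<le>n. x i ^ al q n s i) * (\<Prod>i\<le>n. y i ^ be q n s i))"
  proof (intro sum.cong refl)
    fix s
    have "(\<Prod>i\<le>n. ffu q (s i) (x i) (y i)) =
      (\<Prod>i\<le>n. (if s i < q then -1 else 1) * x i ^ al q n s i * y i ^ be q n s i)"
      by (intro prod.cong refl) (auto simp: ffu_def al_def be_def)
    thus "(\<Prod>i\<le>n. ffu q (s i) (x i) (y i)) = sg q n s * (\<Prod>i\<le>n. x i ^ al q n s i) * (\<Prod>i\<le>n. y i ^ be q n s i)"
      by (simp add: prod.distrib sg_def)
  qed
  finally show ?thesis .
qed

lemma al_be_sum: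
  assumes "q > 0"
  shows "(\<Sum>i\<le>n. al q n s i) + (\<Sum>i\<le>n. be q n s i) = (q - 1) * card {i. i \<le> n \<and> s i < q}"
proof -
  have "(\<Sum>i\<le>n. al q n s i) + (\<Sum>i\<le>n. be q n s i) = (\<Sum>i\<le>n. if s i < q then q - 1 else 0)"
    unfolding sum.distrib[symmetric] al_def be_def by (intro sum.cong refl) (use assms in auto)
  also have "\<dots> = (\<Sum>i\<in>{i. i \<le> n \<and> s i < q}. q - 1)"
    by (simp add: sum.If_cases Int_def)
  finally show ?thesis by simp
qed

lemma card_le: "card {i. i \<le> n \<and> P i} \<le> n + 1"
proof -
  have "card {i. i \<le> n \<and> P i} \<le> card {..n}" by (intro card_mono) auto
  thus ?thesis by simp
qed

lemma point_delta:
  fixes x P :: "nat \<Rightarrow> 'a::{finite,field}"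
  assumes x: "x \<in> proj_points n" and P: "P \<in> proj_points n"
  shows "(if x = P then 1 else 0) = (\<Sum>c\<in>UNIV - {0}. c ^ k * (\<Prod>i\<le>n. if x i = c * P i then 1 else 0))"
proof -
  have "(\<Sum>c\<in>UNIV - {0}. c ^ k * (\<Prod>i\<le>n. if x i = c * P i then (1::'a) else 0))
      = (\<Sum>c\<in>UNIV - {0::'a}. if c = 1 then (if x = P then 1 else 0) else 0)"
  proof (rule sum.cong[OF refl])
    fix c :: 'a assume c: "c \<in> UNIV - {0}"
    have pr: "(\<Prod>i\<le>n. if x i = c * P i then (1::'a) else 0) = (if x = (\<lambda>i. c * P i) then 1 else 0)"
    proof (cases "x = (\<lambda>i. c * P i)")
      case True thus ?thesis by simp
    next
      case False
      then obtain i where i: "x i \<noteq> c * P i" by auto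
      have "i \<le> n"
      proof (rule ccontr)
        assume "\<not> i \<le> n"
        hence "x i = 0" "P i = 0" using x P unfolding proj_points_def by auto
        thus False using i by simp
      qed
      hence "(\<Prod>i\<le>n. if x i = c * P i then (1::'a) else 0) = 0"
        by (intro prod_zero) (use i in auto)
      thus ?thesis using False by simp
    qed
    show "c ^ k * (\<Prod>i\<le>n. if x i = c * P i then 1 else 0) = (if c = 1 then (if x = P then 1 else 0) else 0)"
    proof (cases "c = 1")
      case True thus ?thesis unfolding pr by simp
    next
      case False
      hence "x \<noteq> (\<lambda>i. c * P i)" using points_scale[OF x P, of c] c by blast
      thus ?thesis unfolding pr using False by simp
    qed
  qed
  also have "\<dots> = (if x = P then 1 else 0)" by (simp add: sum.delta)
  finally show ?thesis by simp
qed




lemma key: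
  fixes v :: "(nat \<Rightarrow> 'a::{finite,field}) \<Rightarrow> 'a" and n k q :: nat
  assumes qd: "q = card (UNIV :: 'a set)"
    and nk: "n * (q - 1) \<le> 2 * k"
    and k2: "(2 * k) mod (q - 1) = 0" and k1: "k mod (q - 1) \<noteq> 0"
    and vD: "v \<in> dual_code n (proj_RM n k)"
  shows "v \<in> proj_RM n k"
proof -
  define Q where "Q = q - 1"
  have q2: "q \<ge> 2" using ff_card_pos[where 'a='a] qd by simp
  have Qpos: "Q > 0" using q2 Q_def by simp
  have Q2k: "Q dvd 2 * k" using k2 Q_def by (simp add: dvd_eq_mod_eq_0)
  have Qk: "\<not> Q dvd k" using k1 Q_def by (simp add: dvd_eq_mod_eq_0)
  define S where "S = PiE {..n} (\<lambda>_::nat. {..q})"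
  have finS: "finite S" unfolding S_def by (rule finite_PiE) auto
  define pts where "pts = (proj_points n :: (nat \<Rightarrow> 'a) set)"
  have finP: "finite pts" unfolding pts_def by (rule finite_points)
  have vz: "\<And>p. p \<notin> pts \<Longrightarrow> v p = 0" using vD unfolding dual_code_def pts_def by auto
  have orth: "\<And>c. c \<in> proj_RM n k \<Longrightarrow> dotp n v c = 0" using vD unfolding dual_code_def by auto
  define T where "T = (\<lambda>\<beta>. \<Sum>P\<in>pts. v P * (\<Prod>i\<le>n. P i ^ \<beta> i))"
  define L where "L = (\<lambda>t. \<Sum>c\<in>UNIV - {0::'a}. c ^ t)"
  define B where "B = (\<lambda>s. \<Sum>i\<le>n. be q n s i)"
  define A where "A = (\<lambda>s. \<Sum>i\<le>n. al q n s i)"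
  define coef where "coef = (\<lambda>s. sg q n s * L (k + B s) * T (be q n s) :: 'a)"
  define X where "X = (\<lambda>s (x::nat \<Rightarrow> 'a). \<Prod>i\<le>n. x i ^ al q n s i)"

  have orthT: "T m' = 0" if m': "m' \<in> monomials n k" for m'
  proof -
    define c where "c = (\<lambda>p. if p \<in> proj_points n then hom_eval n k (\<lambda>e. if e = m' then 1 else 0) p else (0::'a))"
    have "c \<in> proj_RM n k" unfolding c_def proj_RM_def by blast
    hence "dotp n v c = 0" by (rule orth)
    moreover have "dotp n v c = T m'"
      unfolding dotp_def T_def c_def pts_def using hom_eval_single[OF m'] by (intro sum.cong) auto
    ultimately show ?thesis by simp
  qed

  have coefnz: "A s \<noteq> 0 \<and> A s \<le> k \<and> Q dvd (k - A s)" if nz: "coef s \<noteq> 0" for s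
  proof -
    have "L (k + B s) \<noteq> 0" using nz unfolding coef_def by auto
    hence dv: "Q dvd (k + B s)" unfolding L_def Q_def using ff_charsum qd by blast
    have "T (be q n s) \<noteq> 0" using nz unfolding coef_def by auto
    have Bk: "B s > k"
    proof (rule ccontr)
      assume "\<not> B s > k"
      hence le: "B s \<le> k" by simp
      have "k - B s = 2 * k - (k + B s)" using le by simp
      moreover have "Q dvd (2 * k - (k + B s))" by (rule dvd_diff_nat[OF Q2k dv])
      ultimately have dv2: "Q dvd (k - B s)" by simp
      have B0: "B s \<noteq> 0" using dv Qk by (metis add_0_right)
      have supp: "\<forall>i>n. be q n s i = 0" unfolding be_def by auto
      obtain m' where m': "m' \<in> monomials n k" "\<forall>p::nat\<Rightarrow>'a. (\<Prod>i\<le>n. p i ^ m' i) = (\<Prod>i\<le>n. p i ^ be q n s i)"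
        using lift_exists[OF supp, of k] B0 le dv2 unfolding B_def Q_def qd by blast
      have "T (be q n s) = T m'" unfolding T_def using m'(2) by simp
      thus False using orthT[OF m'(1)] \<open>T (be q n s) \<noteq> 0\<close> by simp
    qed
    have AB: "A s + B s = Q * card {i. i \<le> n \<and> s i < q}"
      unfolding A_def B_def Q_def using al_be_sum q2 by simp
    have nk': "Q * n \<le> 2 * k" using nk Q_def by (simp add: mult.commute)
    show ?thesis by (rule numeric[OF Qpos AB card_le nk' Bk dv Qk])
  qed

  have repr: "v x = (\<Sum>s\<in>S. coef s * X s x)" if x: "x \<in> pts" for x
  proof -
    define PB where "PB = (\<lambda>s (P::nat \<Rightarrow> 'a). \<Prod>i\<le>n. P i ^ be q n s i)"
    define F where "F = (\<lambda>P (c::'a) s. v P * c ^ k * sg q n s * X s x * (c ^ B s * PB s P))"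
    have "v x = (\<Sum>P\<in>pts. v P * (if x = P then 1 else 0))"
      using x finP by (simp add: if_distrib[of "\<lambda>y. _ * y"] sum.delta cong: if_cong)
    also have "\<dots> = (\<Sum>P\<in>pts. v P * (\<Sum>c\<in>UNIV - {0}. c ^ k * (\<Prod>i\<le>n. if x i = c * P i then 1 else 0)))"
    proof (intro sum.cong refl)
      fix P assume P: "P \<in> pts"
      have "(if x = P then 1 else 0) = (\<Sum>c\<in>UNIV - {0}. c ^ k * (\<Prod>i\<le>n. if x i = c * P i then (1::'a) else 0))"
        by (rule point_delta) (use x P in \<open>auto simp: pts_def\<close>)
      thus "v P * (if x = P then 1 else 0) = v P * (\<Sum>c\<in>UNIV - {0}. c ^ k * (\<Prod>i\<le>n. if x i = c * P i then 1 else 0))"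
        by (rule arg_cong[where f="\<lambda>y. v P * y"])
    qed
    also have "\<dots> = (\<Sum>P\<in>pts. \<Sum>c\<in>UNIV - {0}. \<Sum>s\<in>S. F P c s)"
    proof (rule sum.cong[OF refl])
      fix P
      have "v P * (\<Sum>c\<in>UNIV - {0}. c ^ k * (\<Prod>i\<le>n. if x i = c * P i then 1 else 0))
        = (\<Sum>c\<in>UNIV - {0}. v P * (c ^ k * (\<Prod>i\<le>n. if x i = c * P i then 1 else 0)))"
        by (simp add: sum_distrib_left)
      also have "\<dots> = (\<Sum>c\<in>UNIV - {0}. \<Sum>s\<in>S. F P c s)"
      proof (rule sum.cong[OF refl])
      fix c
      have e: "(\<Prod>i\<le>n. if x i = c * P i then 1 else 0) =
        (\<Sum>s\<in>S. sg q n s * X s x * (\<Prod>i\<le>n. (c * P i) ^ be q n s i))"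
        using expansion[where n=n and x=x and y="\<lambda>i. c * P i"] unfolding S_def X_def qd by simp
      have pw: "\<And>s. (\<Prod>i\<le>n. (c * P i) ^ be q n s i) = c ^ B s * PB s P"
        unfolding B_def PB_def by (simp add: power_mult_distrib prod.distrib power_sum)
      show "v P * (c ^ k * (\<Prod>i\<le>n. if x i = c * P i then 1 else 0)) = (\<Sum>s\<in>S. F P c s)"
        unfolding e pw F_def by (simp add: sum_distrib_left mult_ac)
      qed
      finally show "v P * (\<Sum>c\<in>UNIV - {0}. c ^ k * (\<Prod>i\<le>n. if x i = c * P i then 1 else 0)) = (\<Sum>c\<in>UNIV - {0}. \<Sum>s\<in>S. F P c s)" .
    qed
    also have "\<dots> = (\<Sum>s\<in>S. \<Sum>c\<in>UNIV - {0}. \<Sum>P\<in>pts. F P c s)"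
    proof -
      have "(\<Sum>P\<in>pts. \<Sum>c\<in>UNIV - {0}. \<Sum>s\<in>S. F P c s) = (\<Sum>P\<in>pts. \<Sum>s\<in>S. \<Sum>c\<in>UNIV - {0}. F P c s)"
        by (intro sum.cong refl sum.swap)
      also have "\<dots> = (\<Sum>s\<in>S. \<Sum>P\<in>pts. \<Sum>c\<in>UNIV - {0}. F P c s)" by (rule sum.swap)
      also have "\<dots> = (\<Sum>s\<in>S. \<Sum>c\<in>UNIV - {0}. \<Sum>P\<in>pts. F P c s)"
        by (intro sum.cong refl sum.swap)
      finally show ?thesis .
    qed
    also have "\<dots> = (\<Sum>s\<in>S. coef s * X s x)"
    proof (intro sum.cong refl)
      fix s
      have "(\<Sum>c\<in>UNIV - {0}. \<Sum>P\<in>pts. F P c s) = (\<Sum>c\<in>UNIV - {0}. c ^ (k + B s) * (sg q n s * X s x * T (be q n s)))"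
        unfolding F_def T_def PB_def by (intro sum.cong refl) (simp add: sum_distrib_left mult_ac power_add)
      also have "\<dots> = coef s * X s x"
        unfolding coef_def L_def sum_distrib_left sum_distrib_right by (rule sum.cong[OF refl]) (simp add: mult_ac)
      finally show "(\<Sum>c\<in>UNIV - {0}. \<Sum>P\<in>pts. F P c s) = coef s * X s x" .
    qed
    finally show ?thesis .
  qed

  define lift where "lift = (\<lambda>m. SOME m'. m' \<in> monomials n k \<and> (\<forall>p::nat\<Rightarrow>'a. (\<Prod>i\<le>n. p i ^ m' i) = (\<Prod>i\<le>n. p i ^ m i)))"
  define a where "a = (\<lambda>e. \<Sum>s\<in>S. if lift (al q n s) = e then coef s else 0)"
  have liftp: "lift (al q n s) \<in> monomials n k \<and> (\<forall>p::nat\<Rightarrow>'a. (\<Prod>i\<le>n. p i ^ lift (al q n s) i) = X s p)"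
    if nz: "coef s \<noteq> 0" for s
  proof -
    have supp: "\<forall>i>n. al q n s i = 0" unfolding al_def by auto
    have ex: "\<exists>m'. m' \<in> monomials n k \<and> (\<forall>p::nat\<Rightarrow>'a. (\<Prod>i\<le>n. p i ^ m' i) = (\<Prod>i\<le>n. p i ^ al q n s i))"
      using lift_exists[OF supp, of k] coefnz[OF nz] unfolding A_def Q_def qd by blast
    show ?thesis unfolding lift_def X_def by (rule someI_ex[OF ex])
  qed
  have "v = (\<lambda>p. if p \<in> proj_points n then hom_eval n k a p else 0)"
  proof
    fix x
    show "v x = (if x \<in> proj_points n then hom_eval n k a x else 0)"
    proof (cases "x \<in> pts")
      case False thus ?thesis using vz unfolding pts_def by auto
    next
      case True
      have "hom_eval n k a x = (\<Sum>e\<in>monomials n k. \<Sum>s\<in>S. if lift (al q n s) = e then coef s * (\<Prod>i\<le>n. x i ^ e i) else 0)"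
        unfolding hom_eval_def a_def by (simp add: sum_distrib_right if_distrib[of "\<lambda>y. y * _"] cong: if_cong)
      also have "\<dots> = (\<Sum>s\<in>S. \<Sum>e\<in>monomials n k. if lift (al q n s) = e then coef s * (\<Prod>i\<le>n. x i ^ e i) else 0)"
        by (rule sum.swap)
      also have "\<dots> = (\<Sum>s\<in>S. if lift (al q n s) \<in> monomials n k then coef s * (\<Prod>i\<le>n. x i ^ lift (al q n s) i) else 0)"
        using finite_monomials[of n k] by (simp add: sum.delta)
      also have "\<dots> = (\<Sum>s\<in>S. coef s * X s x)"
      proof (intro sum.cong refl)
        fix s
        show "(if lift (al q n s) \<in> monomials n k then coef s * (\<Prod>i\<le>n. x i ^ lift (al q n s) i) else 0) = coef s * X s x"
          using liftp[of s] by (cases "coef s = 0") auto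
      qed
      finally show ?thesis using repr[OF True] True unfolding pts_def by simp
    qed
  qed
  thus ?thesis unfolding proj_RM_def by blast
qed


theorem mainTheorem6:
  fixes n k q :: nat
  assumes "q = card (UNIV :: ('a::{finite,field}) set)"
    and "n \<ge> 1"
    and "n * (q - 1) \<le> 2 * k" and "k \<le> n * (q - 1)"
    and "(2 * k) mod (q - 1) = 0" and "k mod (q - 1) \<noteq> 0"
  shows "self_orthogonal n (dual_code n (proj_RM n k :: ((nat \<Rightarrow> 'a) \<Rightarrow> 'a) set))"
  unfolding self_orthogonal_def
proof
  fix v :: "(nat \<Rightarrow> 'a) \<Rightarrow> 'a"
  assume v: "v \<in> dual_code n (proj_RM n k)"
  have "\<forall>w\<in>dual_code n (proj_RM n k). dotp n v w = 0"
  proof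
    fix w :: "(nat \<Rightarrow> 'a) \<Rightarrow> 'a"
    assume "w \<in> dual_code n (proj_RM n k)"
    hence "w \<in> proj_RM n k" using key[OF assms(1) assms(3) assms(5) assms(6)] by blast
    thus "dotp n v w = 0" using v unfolding dual_code_def by blast
  qed
  thus "v \<in> dual_code n (dual_code n (proj_RM n k))"
    using v unfolding dual_code_def by blast
qed

end
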